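(* For every $I\in\{0,1\}^{n\times m}$ there exists $\mathcal{F}\subseteq\mathcal{B}_{\mathcal{E}}(I)$ with $|\mathcal{F}|=\mathrm{rank}_\mathrm{B}(I)$ such that $A_{\mathcal{F}}\circ B_{\mathcal{F}}=I$.
   Context: $(A\circ B)_{ij}=\max_l\min(A_{il},B_{lj})$ is the Boolean product; $\mathrm{rank}_\mathrm{B}(I)$ is the least $k$ with $I=A\circ B$ for some $A\in\{0,1\}^{n\times k}$, $B\in\{0,1\}^{k\times m}$. With $X=\{1,\dots,n\}$, $Y=\{1,\dots,m\}$ and for $C\subseteq X$, $D\subseteq Y$: $C^{\uparrow}=\{j\mid \forall i\in C: I_{ij}=1\}$, $D^{\downarrow}=\{i\mid \forall j\in D: I_{ij}=1\}$; $\mathcal{B}(I)=\{\langle C,D\rangle\mid C^\uparrow=D, D^\downarrow=C\}$ ordered by inclusion of first components; $\gamma(i)=\langle\{i\}^{\uparrow\downarrow},\{i\}^\uparrow\rangle$, $\mu(j)=\langle\{j\}^\downarrow,\{j\}^{\downarrow\uparrow}\rangle$, $\mathcal{I}_{ij}=\{c\in\mathcal{B}(I)\mid\gamma(i)\leq c\leq\mu(j)\}$. $\mathcal{E}(I)_{ij}=1$ iff $\mathcal{I}_{ij}$ is non-empty and minimal w.r.t. $\subseteq$ among the non-empty sets $\mathcal{I}_{i'j'}$, and $\mathcal{B}_{\mathcal{E}}(I)=\bigcup\{\mathcal{I}_{ij}\mid \mathcal{E}(I)_{ij}=1\}$. For $\mathcal{F}=\{\langle C_1,D_1\rangle,\dots,\langle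 C_p,D_p\rangle\}\subseteq\mathcal{B}(I)$, $(A_{\mathcal{F}})_{il}=1$ iff $i\in C_l$ and $(B_{\mathcal{F}})_{lj}=1$ iff $j\in D_l$. *)

theory Defs
  imports Main
begin

(* Boolean matrices: an n x m Boolean matrix is a function nat => nat => bool,
   only entries with row index in {1..n} and column index in {1..m} matter. *)

definition bool_prod :: "(nat \<Rightarrow> nat \<Rightarrow> bool) \<Rightarrow> (nat \<Rightarrow> nat \<Rightarrow> bool) \<Rightarrow> nat \<Rightarrow> nat \<Rightarrow> nat \<Rightarrow> bool" where
  "bool_prod A B k i j \<longleftrightarrow> (\<exists>l\<in>{1..k}. A i l \<and> B l j)"

definition is_bool_decomp :: "nat \<Rightarrow> nat \<Rightarrow> (nat \<Rightarrow> nat \<Rightarrow> bool) \<Rightarrow> nat \<Rightarrow> (nat \<Rightarrow> nat \<Rightarrow> bool) \<Rightarrow> (nat \<Rightarrow> nat \<Rightarrow> bool) \<Rightarrow> bool" where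
  "is_bool_decomp n m I k A B \<longleftrightarrow> (\<forall>i\<in>{1..n}. \<forall>j\<in>{1..m}. I i j = bool_prod A B k i j)"

definition rank_B :: "nat \<Rightarrow> nat \<Rightarrow> (nat \<Rightarrow> nat \<Rightarrow> bool) \<Rightarrow> nat" where
  "rank_B n m I = (LEAST k. \<exists>A B. is_bool_decomp n m I k A B)"

definition up :: "nat \<Rightarrow> (nat \<Rightarrow> nat \<Rightarrow> bool) \<Rightarrow> nat set \<Rightarrow> nat set" where
  "up m I C = {j\<in>{1..m}. \<forall>i\<in>C. I i j}"

definition down :: "nat \<Rightarrow> (nat \<Rightarrow> nat \<Rightarrow> bool) \<Rightarrow> nat set \<Rightarrow> nat set" where
  "down n I D = {i\<in>{1..n}. \<forall>j\<in>D. I i j}"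

definition concepts :: "nat \<Rightarrow> nat \<Rightarrow> (nat \<Rightarrow> nat \<Rightarrow> bool) \<Rightarrow> (nat set \<times> nat set) set" where
  "concepts n m I = {(C, D). C \<subseteq> {1..n} \<and> D \<subseteq> {1..m} \<and> up m I C = D \<and> down n I D = C}"

definition gamma :: "nat \<Rightarrow> nat \<Rightarrow> (nat \<Rightarrow> nat \<Rightarrow> bool) \<Rightarrow> nat \<Rightarrow> nat set \<times> nat set" where
  "gamma n m I i = (down n I (up m I {i}), up m I {i})"

definition mu :: "nat \<Rightarrow> nat \<Rightarrow> (nat \<Rightarrow> nat \<Rightarrow> bool) \<Rightarrow> nat \<Rightarrow> nat set \<times> nat set" where
  "mu n m I j = (down n I {j}, up m I (down n I {j}))"

definition concept_le :: "nat set \<times> nat set \<Rightarrow> nat set \<times> nat set \<Rightarrow> bool" where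
  "concept_le c d \<longleftrightarrow> fst c \<subseteq> fst d"

definition interval :: "nat \<Rightarrow> nat \<Rightarrow> (nat \<Rightarrow> nat \<Rightarrow> bool) \<Rightarrow> nat \<Rightarrow> nat \<Rightarrow> (nat set \<times> nat set) set" where
  "interval n m I i j = {c \<in> concepts n m I. concept_le (gamma n m I i) c \<and> concept_le c (mu n m I j)}"

definition ess :: "nat \<Rightarrow> nat \<Rightarrow> (nat \<Rightarrow> nat \<Rightarrow> bool) \<Rightarrow> nat \<Rightarrow> nat \<Rightarrow> bool" where
  "ess n m I i j \<longleftrightarrow> i \<in> {1..n} \<and> j \<in> {1..m} \<and> interval n m I i j \<noteq> {} \<and>
     (\<forall>i'\<in>{1..n}. \<forall>j'\<in>{1..m}. interval n m I i' j' \<noteq> {} \<and> interval n m I i' j' \<subseteq> interval n m I i j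
        \<longrightarrow> interval n m I i' j' = interval n m I i j)"

definition ess_concepts :: "nat \<Rightarrow> nat \<Rightarrow> (nat \<Rightarrow> nat \<Rightarrow> bool) \<Rightarrow> (nat set \<times> nat set) set" where
  "ess_concepts n m I = \<Union>{interval n m I i j | i j. ess n m I i j}"

(* A_F and B_F for an enumeration fs = [<C_1,D_1>, ..., <C_p,D_p>] of F (1-based columns/rows) *)
definition A_F :: "(nat set \<times> nat set) list \<Rightarrow> nat \<Rightarrow> nat \<Rightarrow> bool" where
  "A_F fs i l \<longleftrightarrow> i \<in> fst (fs ! (l - 1))"

definition B_F :: "(nat set \<times> nat set) list \<Rightarrow> nat \<Rightarrow> nat \<Rightarrow> bool" where
  "B_F fs l j \<longleftrightarrow> j \<in> snd (fs ! (l - 1))"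

end

theory Submission
  imports Defs
begin

lemma mem_concepts: "c \<in> concepts n m I \<longleftrightarrow> fst c \<subseteq> {1..n} \<and> snd c \<subseteq> {1..m} \<and> up m I (fst c) = snd c \<and> down n I (snd c) = fst c"
  by (cases c) (simp add: concepts_def)

lemma concept_rect: "c \<in> concepts n m I \<Longrightarrow> i \<in> fst c \<Longrightarrow> j \<in> snd c \<Longrightarrow> I i j"
  unfolding mem_concepts down_def by blast

lemma up_down_up: "up m I (down n I (up m I X)) = up m I X" if "X \<subseteq> {1..n}"
  using that unfolding up_def down_def by auto

lemma interval_iff:
  assumes "i \<in> {1..n}" "j \<in> {1..m}"
  shows "c \<in> interval n m I i j \<longleftrightarrow> c \<in> concepts n m I \<and> i \<in> fst c \<and> j \<in> snd c"
proof (cases "c \<in> concepts n m I")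
  case True
  then have C: "fst c \<subseteq> {1..n}" "snd c \<subseteq> {1..m}" "up m I (fst c) = snd c" "down n I (snd c) = fst c"
    by (auto simp: mem_concepts)
  have g: "concept_le (gamma n m I i) c \<longleftrightarrow> i \<in> fst c"
  proof
    assume "concept_le (gamma n m I i) c"
    moreover have "i \<in> down n I (up m I {i})" using assms unfolding up_def down_def by auto
    ultimately show "i \<in> fst c" unfolding concept_le_def gamma_def by auto
  next
    assume "i \<in> fst c"
    then have "\<forall>jj\<in>snd c. I i jj" using True concept_rect by blast
    have "down n I (up m I {i}) \<subseteq> fst c"
    proof
      fix x assume "x \<in> down n I (up m I {i})"
      then have x: "x \<in> {1..n}" "\<forall>jj\<in>{1..m}. I i jj \<longrightarrow> I x jj" unfolding up_def down_def by auto
      have "\<forall>jj\<in>snd c. I x jj" using x C(2) \<open>\<forall>jj\<in>snd c. I i jj\<close> by blast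
      then have "x \<in> down n I (snd c)" using x(1) unfolding down_def by auto
      then show "x \<in> fst c" using C(4) by simp
    qed
    then show "concept_le (gamma n m I i) c" unfolding concept_le_def gamma_def by simp
  qed
  have u: "concept_le c (mu n m I j) \<longleftrightarrow> j \<in> snd c"
  proof
    assume "concept_le c (mu n m I j)"
    then have "fst c \<subseteq> down n I {j}" unfolding concept_le_def mu_def by auto
    then show "j \<in> snd c" using C(3) assms unfolding up_def down_def by auto
  next
    assume "j \<in> snd c"
    then show "concept_le c (mu n m I j)" using C unfolding concept_le_def mu_def up_def down_def
      by auto
  qed
  show ?thesis using True g u unfolding interval_def by auto
qed (simp add: interval_def)

lemma finite_concepts: "finite (concepts n m I)"
proof -
  have "concepts n m I \<subseteq> Pow {1..n} \<times> Pow {1..m}" by (auto simp: concepts_def)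
  then show ?thesis by (rule finite_subset) auto
qed

lemma finite_interval: "finite (interval n m I i j)"
  using finite_concepts by (rule finite_subset[rotated]) (auto simp: interval_def)

lemma exists_ess:
  assumes "i \<in> {1..n}" "j \<in> {1..m}" "interval n m I i j \<noteq> {}"
  shows "\<exists>i' j'. ess n m I i' j' \<and> interval n m I i' j' \<subseteq> interval n m I i j"
proof -
  let ?P = "{(i',j'). i' \<in> {1..n} \<and> j' \<in> {1..m} \<and> interval n m I i' j' \<noteq> {} \<and> interval n m I i' j' \<subseteq> interval n m I i j}"
  have fin: "finite ?P" by (rule finite_subset[of _ "{1..n} \<times> {1..m}"]) auto
  have ne: "(i,j) \<in> ?P" using assms by auto
  obtain p where p: "p \<in> ?P" "\<forall>q\<in>?P. card (interval n m I (fst p) (snd p)) \<le> card (interval n m I (fst q) (snd q))"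
  proof -
    from ex_has_least_nat[of "\<lambda>q. q \<in> ?P" "(i,j)" "\<lambda>q. card (interval n m I (fst q) (snd q))", OF ne]
    obtain p where "p \<in> ?P" "\<forall>q. q \<in> ?P \<longrightarrow> card (interval n m I (fst p) (snd p)) \<le> card (interval n m I (fst q) (snd q))"
      by (elim exE conjE)
    then show ?thesis using that by blast
  qed
  obtain i' j' where pp: "p = (i',j')" by (cases p)
  have "ess n m I i' j'"
    unfolding ess_def
  proof (intro conjI ballI impI)
    fix a b assume ab: "a \<in> {1..n}" "b \<in> {1..m}" "interval n m I a b \<noteq> {} \<and> interval n m I a b \<subseteq> interval n m I i' j'"
    then have "(a,b) \<in> ?P" using p(1) pp by auto
    then have "card (interval n m I (fst p) (snd p)) \<le> card (interval n m I (fst (a,b)) (snd (a,b)))" using p(2) by blast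
    then have "card (interval n m I i' j') \<le> card (interval n m I a b)" using pp by simp
    then show "interval n m I a b = interval n m I i' j'"
      using card_seteq[OF finite_interval[of n m I i' j']] ab(3) by blast
  qed (use p(1) pp in auto)
  then show ?thesis using p(1) pp by auto
qed

lemma bool_prod_list:
  "bool_prod (A_F fs) (B_F fs) (length fs) i j \<longleftrightarrow> (\<exists>c\<in>set fs. i \<in> fst c \<and> j \<in> snd c)"
proof
  assume "bool_prod (A_F fs) (B_F fs) (length fs) i j"
  then obtain l where "l \<in> {1..length fs}" "i \<in> fst (fs!(l-1))" "j \<in> snd (fs!(l-1))"
    unfolding bool_prod_def A_F_def B_F_def by auto
  then show "\<exists>c\<in>set fs. i \<in> fst c \<and> j \<in> snd c"
    by (metis Suc_le_eq Suc_pred atLeastAtMost_iff le_eq_less_or_eq less_one nth_mem not_less)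
next
  assume "\<exists>c\<in>set fs. i \<in> fst c \<and> j \<in> snd c"
  then obtain l where "l < length fs" "i \<in> fst (fs!l)" "j \<in> snd (fs!l)"
    by (metis in_set_conv_nth)
  then show "bool_prod (A_F fs) (B_F fs) (length fs) i j"
    unfolding bool_prod_def A_F_def B_F_def by (intro bexI[of _ "Suc l"]) auto
qed


lemma decomp_exists: "\<exists>k A B. is_bool_decomp n m I k A B"
  by (rule exI[of _ n], rule exI[of _ "\<lambda>i l. i = l"], rule exI[of _ I])
     (auto simp: is_bool_decomp_def bool_prod_def)

theorem theorem5:
  fixes n m :: nat and I :: "nat \<Rightarrow> nat \<Rightarrow> bool"
  shows "\<exists>fs. distinct fs \<and> set fs \<subseteq> ess_concepts n m I \<and> length fs = rank_B n m I \<and>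
           (\<forall>i\<in>{1..n}. \<forall>j\<in>{1..m}. bool_prod (A_F fs) (B_F fs) (length fs) i j = I i j)"
proof -
  define k where "k = rank_B n m I"
  obtain A B where AB: "is_bool_decomp n m I k A B"
    unfolding k_def rank_B_def using LeastI_ex[OF decomp_exists] by blast
  define Al where "Al l = {i\<in>{1..n}. A i l}" for l
  define cc where "cc l = (down n I (up m I (Al l)), up m I (Al l))" for l
  have cc_con: "cc l \<in> concepts n m I" for l
    unfolding mem_concepts cc_def using up_down_up[of "Al l" n m I]
    by (auto simp: Al_def up_def down_def)
  define S where "S = cc ` {1..k} \<inter> ess_concepts n m I"
  have finS: "finite S" unfolding S_def by auto
  have cardS: "card S \<le> k"
  proof -
    have "card S \<le> card (cc ` {1..k})" unfolding S_def by (rule card_mono) auto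
    also have "\<dots> \<le> card {1..k}" by (rule card_image_le) simp
    finally show ?thesis by simp
  qed
  have cover: "I i j \<longleftrightarrow> (\<exists>c\<in>S. i \<in> fst c \<and> j \<in> snd c)" if ij: "i \<in> {1..n}" "j \<in> {1..m}" for i j
  proof
    assume "\<exists>c\<in>S. i \<in> fst c \<and> j \<in> snd c"
    then show "I i j" using concept_rect cc_con unfolding S_def by blast
  next
    assume Iij: "I i j"
    have "cc (Suc 0) \<in> concepts n m I" by (rule cc_con)
    have "(down n I {j}, up m I (down n I {j})) \<in> interval n m I i j"
      using ij Iij unfolding interval_iff[OF ij] mem_concepts up_def down_def by auto
    then have ne: "interval n m I i j \<noteq> {}" by blast
    obtain i' j' where e: "ess n m I i' j'" and sub: "interval n m I i' j' \<subseteq> interval n m I i j"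
      using exists_ess[OF ij ne] by blast
    have ij': "i' \<in> {1..n}" "j' \<in> {1..m}" "interval n m I i' j' \<noteq> {}" using e unfolding ess_def by auto
    then obtain c0 where "c0 \<in> interval n m I i' j'" by blast
    then have "I i' j'" using interval_iff[OF ij'(1,2)] concept_rect by blast
    then obtain l where l: "l \<in> {1..k}" "A i' l" "B l j'"
      using AB ij' unfolding is_bool_decomp_def bool_prod_def by blast
    have "j' \<in> up m I (Al l)"
    proof -
      have "I x j'" if "x \<in> Al l" for x
        using AB that l ij' unfolding is_bool_decomp_def bool_prod_def Al_def by blast
      then show ?thesis using ij' unfolding up_def by auto
    qed
    moreover have "i' \<in> down n I (up m I (Al l))"
      using ij' l unfolding up_def down_def Al_def by auto
    ultimately have "cc l \<in> interval n m I i' j'"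
      using interval_iff[OF ij'(1,2)] cc_con unfolding cc_def by auto
    then have "cc l \<in> S" "cc l \<in> interval n m I i j"
      using e l sub unfolding S_def ess_concepts_def by blast+
    then show "\<exists>c\<in>S. i \<in> fst c \<and> j \<in> snd c" using interval_iff[OF ij] by blast
  qed
  obtain fs where fs: "set fs = S" "distinct fs" using finite_distinct_list[OF finS] by blast
  have len: "length fs \<le> k" using fs cardS distinct_card[OF fs(2)] by simp
  have dec: "\<forall>i\<in>{1..n}. \<forall>j\<in>{1..m}. bool_prod (A_F fs) (B_F fs) (length fs) i j = I i j"
    using cover fs(1) bool_prod_list by blast
  then have "is_bool_decomp n m I (length fs) (A_F fs) (B_F fs)" unfolding is_bool_decomp_def by auto
  then have "k \<le> length fs" unfolding k_def rank_B_def by (intro Least_le) blast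
  then have "length fs = k" using len by simp
  moreover have "set fs \<subseteq> ess_concepts n m I" using fs unfolding S_def by auto
  ultimately show ?thesis using fs dec k_def by blast
qed

end
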